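(* Fix a capacity $q$, a reservation vector $\kappa$ and a hierarchical horizontal type correspondence $\rho$. The hierarchical choice rule $A\mapsto C^h(A,\kappa,\rho)$ satisfies (i) the substitutes property: for every set $A$ of individuals and distinct individuals $i,j\notin A$, if $i\in C^h(A\cup\{i,j\},\kappa,\rho)$ then $i\in C^h(A\cup\{i\},\kappa,\rho)$; and (ii) size monotonicity: for every $A$ and every individual $i$, $|C^h(A,\kappa,\rho)|\le|C^h(A\cup\{i\},\kappa,\rho)|$.
   Context: Setting. $I$ is a finite set of individuals with a strict merit ranking $\succ$. $H=\{h_1,\dots,h_L\}$ is a set of horizontal types and $\rho(i)\subseteq H$ is the set of horizontal types of $i$; $\rho^{-1}(h)=\{i:h\in\rho(i)\}$. Hierarchical: for any $h,h'$ with $\rho^{-1}(h)\cap\rho^{-1}(h')\neq\emptyset$, either $\rho^{-1}(h)\subsetneq\rho^{-1}(h')$ or $\rho^{-1}(h')\subsetneq\rho^{-1}(h)$; in the latter case $h$ contains $h'$. There are $q$ positions and $\kappa_j\in\mathbb{Z}_+$ positions reserved for $h_j$; a chosen individual counts against every type she has. Hierarchical choice rule $C^h(A,\kappa,\rho)$: Step 1: let $H^1$ be the types containing no other type. If no individual in $A$ has any horizontal type, choose the $\min(q,|A|)$ highest-ranked individuals and stop. Otherwise, for each $h_j\in H^1$ (in a fixed order, never exceeding the remaining positions), choose all not-yet-chosen individuals of $A$ of type $h_j$ if there are at most $\kappa_j$ of them, and otherwise the $\kappa_j$ highest-ranked; reduce the available positions and the reservation of every type containing $h_j$ by the number chosen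 (floored at $0$); remove $h_j$. Step $n\ge2$: stop if no positions or individuals remain; if no type remains, fill remaining positions with the highest-ranked remaining individuals and stop; otherwise let $H^n$ be the remaining types containing no other remaining type and process each $h_j\in H^n$ as in Step 1 with the updated reservation. $C^h(A,\kappa,\rho)$ is the set of all individuals chosen. *)

theory Defs
  imports Main
begin

text \<open>Merit ranking: a strict linear order R on the individuals I; (i, j) \<in> R means i \<succ> j.
  top R k X = the k highest-ranked members of X (all of X if card X \<le> k).\<close>
definition top :: "'i rel \<Rightarrow> nat \<Rightarrow> 'i set \<Rightarrow> 'i set" where
  "top R k X = {i \<in> X. card {j \<in> X. (j, i) \<in> R} < k}"

definition preim :: "'i set \<Rightarrow> ('i \<Rightarrow> 'h set) \<Rightarrow> 'h \<Rightarrow> 'i set" where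
  "preim I \<rho> h = {i \<in> I. h \<in> \<rho> i}"

definition contains :: "'i set \<Rightarrow> ('i \<Rightarrow> 'h set) \<Rightarrow> 'h \<Rightarrow> 'h \<Rightarrow> bool" where
  "contains I \<rho> h h' \<longleftrightarrow> preim I \<rho> h \<inter> preim I \<rho> h' \<noteq> {} \<and> preim I \<rho> h' \<subset> preim I \<rho> h"

definition hierarchical :: "'i set \<Rightarrow> 'h set \<Rightarrow> ('i \<Rightarrow> 'h set) \<Rightarrow> bool" where
  "hierarchical I H \<rho> \<longleftrightarrow> (\<forall>h\<in>H. \<forall>h'\<in>H. h \<noteq> h' \<longrightarrow> preim I \<rho> h \<inter> preim I \<rho> h' \<noteq> {} \<longrightarrow>
      preim I \<rho> h \<subset> preim I \<rho> h' \<or> preim I \<rho> h' \<subset> preim I \<rho> h)"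

text \<open>State of the procedure: (remaining types, chosen individuals, remaining positions,
  current reservations).\<close>
type_synonym ('i, 'h) st = "'h set \<times> 'i set \<times> nat \<times> ('h \<Rightarrow> nat)"

definition process_type :: "'i set \<Rightarrow> 'i rel \<Rightarrow> ('i \<Rightarrow> 'h set) \<Rightarrow> 'i set \<Rightarrow> 'h \<Rightarrow> ('i, 'h) st \<Rightarrow> ('i, 'h) st" where
  "process_type I R \<rho> A h st = (case st of (Rem, S, p, kap) \<Rightarrow>
     (let X = {i \<in> A - S. h \<in> \<rho> i};
          Ch = top R (min p (kap h)) X;
          n = card Ch
      in (Rem - {h}, S \<union> Ch, p - n,
          (\<lambda>h''. if contains I \<rho> h'' h then kap h'' - n else kap h''))))"

definition minimal_types :: "'i set \<Rightarrow> ('i \<Rightarrow> 'h set) \<Rightarrow> 'h set \<Rightarrow> 'h set" where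
  "minimal_types I \<rho> Rem = {h \<in> Rem. \<not> (\<exists>h'\<in>Rem. contains I \<rho> h h')}"

definition round :: "'i set \<Rightarrow> 'i rel \<Rightarrow> ('i \<Rightarrow> 'h set) \<Rightarrow> 'h list \<Rightarrow> 'i set \<Rightarrow> ('i, 'h) st \<Rightarrow> ('i, 'h) st" where
  "round I R \<rho> hs A st =
     foldl (\<lambda>s h. process_type I R \<rho> A h s) st
       (filter (\<lambda>h. h \<in> minimal_types I \<rho> (fst st)) hs)"

text \<open>After length hs steps no type remains (each step
  removes at least one remaining type); remaining positions are then filled by merit.\<close>
definition Ch :: "'i set \<Rightarrow> 'i rel \<Rightarrow> 'h list \<Rightarrow> nat \<Rightarrow> 'i set \<Rightarrow> ('h \<Rightarrow> nat) \<Rightarrow> ('i \<Rightarrow> 'h set) \<Rightarrow> 'i set" where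
  "Ch I R hs q A \<kappa> \<rho> =
     (if \<forall>i\<in>A. \<rho> i = {} then top R q A
      else (case (round I R \<rho> hs A ^^ length hs) (set hs, {}, q, \<kappa>) of
              (Rem, S, p, kap) \<Rightarrow> S \<union> top R p (A - S)))"

end

theory Submission
  imports Defs
begin


definition rk :: "'i rel \<Rightarrow> 'i set \<Rightarrow> 'i \<Rightarrow> nat" where
  "rk R X i = card {j \<in> X. (j, i) \<in> R}"

lemma top_rk: "top R k X = {i \<in> X. rk R X i < k}"
  by (simp add: top_def rk_def)

lemma top_sub: "top R k X \<subseteq> X"
  by (auto simp: top_def)

lemma top_mono_k: "k \<le> k' \<Longrightarrow> top R k X \<subseteq> top R k' X"
  by (auto simp: top_def)

lemma top_zero[simp]: "top R 0 X = {}"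
  by (auto simp: top_def)

lemma top_empty[simp]: "top R k {} = {}"
  by (auto simp: top_def)

lemma top_insert:
  assumes "finite X"
  shows "top R k (insert x X) - {x} \<subseteq> top R k X"
proof
  fix z assume z: "z \<in> top R k (insert x X) - {x}"
  have "card {j \<in> X. (j, z) \<in> R} \<le> card {j \<in> insert x X. (j, z) \<in> R}"
    by (rule card_mono) (use assms in auto)
  with z show "z \<in> top R k X" by (auto simp: top_def)
qed

lemma rk_less:
  assumes "finite X" "trans R" "irrefl R" "i \<in> X" "(i, i') \<in> R" "i' \<in> X"
  shows "rk R X i < rk R X i'"
  unfolding rk_def
proof (rule psubset_card_mono)
  show "finite {j \<in> X. (j, i') \<in> R}" using assms by auto
  show "{j \<in> X. (j, i) \<in> R} \<subset> {j \<in> X. (j, i') \<in> R}"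
  proof
    show "{j \<in> X. (j, i) \<in> R} \<subseteq> {j \<in> X. (j, i') \<in> R}"
      using assms(2,5) by (auto dest: transD)
    have "i \<notin> {j \<in> X. (j, i) \<in> R}" using assms(3) by (auto simp: irrefl_def)
    moreover have "i \<in> {j \<in> X. (j, i') \<in> R}" using assms by auto
    ultimately show "{j \<in> X. (j, i) \<in> R} \<noteq> {j \<in> X. (j, i') \<in> R}" by blast
  qed
qed

lemma rk_bij:
  assumes "finite X" "X \<subseteq> I" "strict_linear_order_on I R"
  shows "bij_betw (rk R X) X {0..<card X}"
proof -
  have tr: "trans R" and ir: "irrefl R" and tot: "total_on I R"
    using assms(3) by (auto simp: strict_linear_order_on_def)
  have inj: "inj_on (rk R X) X"
  proof (rule inj_onI)
    fix a b assume ab: "a \<in> X" "b \<in> X" "rk R X a = rk R X b"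
    show "a = b"
    proof (rule ccontr)
      assume "a \<noteq> b"
      with tot ab assms(2) have "(a, b) \<in> R \<or> (b, a) \<in> R" by (auto simp: total_on_def)
      with rk_less[OF assms(1) tr ir] ab show False by fastforce
    qed
  qed
  have sub: "rk R X ` X \<subseteq> {0..<card X}"
  proof
    fix y assume "y \<in> rk R X ` X"
    then obtain i where i: "i \<in> X" "y = rk R X i" by auto
    have "{j \<in> X. (j, i) \<in> R} \<subset> X" using i ir by (auto simp: irrefl_def)
    hence "card {j \<in> X. (j, i) \<in> R} < card X" using assms(1) by (rule psubset_card_mono[rotated])
    with i show "y \<in> {0..<card X}" by (simp add: rk_def)
  qed
  have "rk R X ` X = {0..<card X}"
    by (rule card_subset_eq) (use sub inj in \<open>auto simp: card_image\<close>)
  with inj show ?thesis by (simp add: bij_betw_def)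
qed

lemma card_top:
  assumes "finite X" "X \<subseteq> I" "strict_linear_order_on I R"
  shows "card (top R k X) = min k (card X)"
proof -
  have b: "bij_betw (rk R X) X {0..<card X}" by (rule rk_bij[OF assms])
  have "top R k X \<subseteq> X" by (rule top_sub)
  hence inj: "inj_on (rk R X) (top R k X)" using b by (auto simp: bij_betw_def intro: inj_on_subset)
  have "rk R X ` top R k X = {0..<card X} \<inter> {..<k}"
  proof
    show "rk R X ` top R k X \<subseteq> {0..<card X} \<inter> {..<k}"
      using b by (auto simp: top_rk bij_betw_def)
    show "{0..<card X} \<inter> {..<k} \<subseteq> rk R X ` top R k X"
    proof
      fix y assume y: "y \<in> {0..<card X} \<inter> {..<k}"
      hence "y \<in> rk R X ` X" using b by (auto simp: bij_betw_def)
      then obtain i where "i \<in> X" "rk R X i = y" by auto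
      with y show "y \<in> rk R X ` top R k X" by (auto simp: top_rk)
    qed
  qed
  hence "card (top R k X) = card ({0..<card X} \<inter> {..<k})"
    using card_image[OF inj] by simp
  also have "{0..<card X} \<inter> {..<k} = {0..<min k (card X)}" by auto
  finally show ?thesis by simp
qed



definition rel :: "nat \<Rightarrow> 'i \<Rightarrow> 'i set set \<Rightarrow> 'i set \<Rightarrow> 'i set \<Rightarrow> bool" where
  "rel q j G S1 S2 \<longleftrightarrow> S2 = insert j S1 \<or>
     (\<exists>x \<in> insert j S1. S2 = insert j S1 - {x} \<and> (q - card S1 = 0 \<or> (\<forall>Q\<in>G. x \<in> Q \<longleftrightarrow> j \<in> Q)))"

lemma rel_I1: "S2 = insert j S1 \<Longrightarrow> rel q j G S1 S2"
  unfolding rel_def by (rule disjI1)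

lemma rel_I2: "x \<in> insert j S1 \<Longrightarrow> S2 = insert j S1 - {x} \<Longrightarrow>
    q - card S1 = 0 \<or> (\<forall>Q\<in>G. x \<in> Q \<longleftrightarrow> j \<in> Q) \<Longrightarrow> rel q j G S1 S2"
  unfolding rel_def by (rule disjI2, rule bexI[of _ x]) auto

lemma card_1_obt:
  assumes "finite A" "B \<subseteq> A" "card A = Suc (card B)"
  obtains y where "y \<in> A" "y \<notin> B" "A = insert y B"
proof -
  have "card (A - B) = 1" using assms by (simp add: card_Diff_subset finite_subset)
  then obtain y where y: "A - B = {y}" by (auto simp: card_Suc_eq)
  hence "y \<in> A" "y \<notin> B" "A = insert y B" using assms(2) by blast+
  thus ?thesis using that by blast
qed

lemma card_1_ex: "finite A \<Longrightarrow> B \<subseteq> A \<Longrightarrow> card A = Suc (card B) \<Longrightarrow> \<exists>y. y \<in> A \<and> y \<notin> B \<and> A = insert y B"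
proof -
  assume f: "finite A" and s: "B \<subseteq> A" and c: "card A = Suc (card B)"
  have "card (A - B) = 1" using f s c by (simp add: card_Diff_subset finite_subset)
  then obtain y where y: "A - B = {y}" by (auto simp: card_Suc_eq)
  thus ?thesis using s by blast
qed

lemma step_rel:
  assumes fin: "finite I" and slo: "strict_linear_order_on I R"
    and A: "A \<subseteq> I" and j: "j \<in> I" "j \<notin> A" and S1: "S1 \<subseteq> A" and P: "P \<subseteq> I"
    and r: "rel q j G S1 S2"
    and PG: "P \<in> G \<or> insert j A \<subseteq> P"
    and G': "\<forall>Q\<in>G'. Q \<in> G \<and> (\<forall>z\<in>P. z \<in> Q \<longleftrightarrow> P \<subseteq> Q)"
  shows "rel q j G' (S1 \<union> top R (min (q - card S1) (c - card (S1 \<inter> P))) ((A - S1) \<inter> P))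
                    (S2 \<union> top R (min (q - card S2) (c - card (S2 \<inter> P))) ((insert j A - S2) \<inter> P))"
proof -
  define X where "X = (A - S1) \<inter> P"
  define k1 where "k1 = min (q - card S1) (c - card (S1 \<inter> P))"
  define k2 where "k2 = min (q - card S2) (c - card (S2 \<inter> P))"
  define C1 where "C1 = top R k1 X"
  have fA: "finite A" using finite_subset[OF A fin] .
  have fS1: "finite S1" using finite_subset[OF S1 fA] .
  have fX: "finite X" using fA by (simp add: X_def)
  have XI: "X \<subseteq> I" using A X_def by auto
  have C1X: "C1 \<subseteq> X" by (simp add: C1_def top_sub)
  have cC1: "card C1 = min k1 (card X)" using card_top[OF fX XI slo] C1_def by simp
  have jS1: "j \<notin> S1" using S1 j by auto
  have fC1: "finite C1" using finite_subset[OF C1X fX] .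
  have cU: "card (S1 \<union> C1) = card S1 + card C1"
    using C1X X_def fS1 fC1 by (subst card_Un_disjoint) auto
  show ?thesis
    unfolding k1_def[symmetric] k2_def[symmetric] X_def[symmetric] C1_def[symmetric]
  proof (cases "S2 = insert j S1")
    case True
    have X2: "(insert j A - S2) \<inter> P = X" using True X_def j by auto
    define C2 where "C2 = top R k2 X"
    have cS2: "card S2 = Suc (card S1)" using True fS1 jS1 by simp
    have cS2P: "card (S2 \<inter> P) = card (S1 \<inter> P) + (if j \<in> P then 1 else 0)"
    proof (cases "j \<in> P")
      case True
      hence "S2 \<inter> P = insert j (S1 \<inter> P)" using \<open>S2 = insert j S1\<close> by blast
      moreover have "finite (S1 \<inter> P)" using fS1 by simp
      ultimately show ?thesis using jS1 True by simp
    next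
      case False
      hence "S2 \<inter> P = S1 \<inter> P" using \<open>S2 = insert j S1\<close> by blast
      thus ?thesis using False by simp
    qed
    have k21: "k2 \<le> k1" unfolding k1_def k2_def using cS2 cS2P by auto
    have k12: "k1 \<le> Suc k2" unfolding k1_def k2_def using cS2 cS2P by auto
    have C21: "C2 \<subseteq> C1" unfolding C1_def C2_def by (rule top_mono_k[OF k21])
    have cC2: "card C2 = min k2 (card X)" using card_top[OF fX XI slo] C2_def by simp
    show "rel q j G' (S1 \<union> C1) (S2 \<union> top R k2 ((insert j A - S2) \<inter> P))"
      unfolding X2 C2_def[symmetric]
    proof (cases "card C1 = card C2")
      case True
      hence "C2 = C1" using card_subset_eq[OF fC1 C21] by simp
      hence "C1 = C2" by simp
      hence "S2 \<union> C2 = insert j (S1 \<union> C1)" using \<open>S2 = insert j S1\<close> by simp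
      thus "rel q j G' (S1 \<union> C1) (S2 \<union> C2)" by (rule rel_I1)
    next
      case False
      hence cc: "card C1 = Suc (card C2)" using cC1 cC2 k21 k12 by linarith
      obtain y where y: "y \<in> C1" "y \<notin> C2" "C1 = insert y C2"
        by (rule card_1_obt[OF fC1 C21 cc])
      have yX: "y \<in> X" using y C1X by auto
      have yj: "y \<noteq> j" "y \<notin> S1" "y \<in> P" using yX X_def j by auto
      have eq: "S2 \<union> C2 = insert j (S1 \<union> C1) - {y}"
        using \<open>S2 = insert j S1\<close> y(2,3) yj(1,2) by blast
      have cond: "q - card (S1 \<union> C1) = 0 \<or> (\<forall>Q\<in>G'. y \<in> Q \<longleftrightarrow> j \<in> Q)"
      proof (cases "j \<in> P")
        case True
        thus ?thesis using G' yj by blast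
      next
        case False
        hence "card (S2 \<inter> P) = card (S1 \<inter> P)" using cS2P by simp
        hence "card C1 \<ge> q - card S1" using cC1 cC2 cc cS2 unfolding k1_def k2_def by linarith
        thus ?thesis using cU by simp
      qed
      have yin: "y \<in> insert j (S1 \<union> C1)" using y by simp
      show "rel q j G' (S1 \<union> C1) (S2 \<union> C2)" by (rule rel_I2[OF yin eq cond])
    qed
  next
    case False
    then obtain x where x: "x \<in> insert j S1" "S2 = insert j S1 - {x}"
      and cx: "q - card S1 = 0 \<or> (\<forall>Q\<in>G. x \<in> Q \<longleftrightarrow> j \<in> Q)"
      using r by (auto simp: rel_def)
    have cS2: "card S2 = card S1"
    proof (cases "x = j")
      case True thus ?thesis using x jS1 by simp
    next
      case False thus ?thesis using x fS1 jS1 by (simp add: card_insert_if)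
    qed
    show "rel q j G' (S1 \<union> C1) (S2 \<union> top R k2 ((insert j A - S2) \<inter> P))"
    proof (cases "q - card S1 = 0")
      case True
      hence "k1 = 0" "k2 = 0" using cS2 by (auto simp: k1_def k2_def)
      hence "C1 = {}" "top R k2 ((insert j A - S2) \<inter> P) = {}" using C1_def by simp_all
      thus ?thesis using rel_I2[OF x(1) x(2), of q G'] True by simp
    next
      case qpos: False
      hence iff: "\<forall>Q\<in>G. x \<in> Q \<longleftrightarrow> j \<in> Q" using cx by simp
      have xA: "x \<in> insert j A" using x S1 by auto
      have xP: "x \<in> P \<longleftrightarrow> j \<in> P" using PG iff xA by auto
      have cS2P: "card (S2 \<inter> P) = card (S1 \<inter> P)"
      proof (cases "x = j")
        case True thus ?thesis using x jS1 by simp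
      next
        case False
        hence xS1: "x \<in> S1" using x by simp
        show ?thesis
        proof (cases "x \<in> P")
          case True
          hence "S2 \<inter> P = insert j (S1 \<inter> P - {x})" using x xP False by auto
          moreover have "card (S1 \<inter> P) > 0" using fS1 xS1 True by (auto simp: card_gt_0_iff)
          ultimately show ?thesis using fS1 jS1 xS1 True by (simp add: card_insert_if)
        next
          case False
          hence "S2 \<inter> P = S1 \<inter> P" using x xP by auto
          thus ?thesis by simp
        qed
      qed
      have kk: "k2 = k1" using cS2 cS2P by (simp add: k1_def k2_def)
      have U2: "insert j A - S2 = insert x (A - S1)"
      proof (cases "x = j")
        case True thus ?thesis using x jS1 j by auto
      next
        case False thus ?thesis using x S1 j by auto
      qed
      have xnX: "x \<notin> A - S1" using x j by auto
      have Gsub: "\<forall>Q\<in>G'. x \<in> Q \<longleftrightarrow> j \<in> Q" using G' iff by blast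
      show ?thesis
      proof (cases "x \<in> P")
        case False
        hence X2: "(insert j A - S2) \<inter> P = X" using U2 X_def by auto
        have "x \<notin> C1" using C1X False X_def by auto
        hence "S2 \<union> C1 = insert j (S1 \<union> C1) - {x}" using x by auto
        moreover have "x \<in> insert j (S1 \<union> C1)" using x by blast
        ultimately show ?thesis unfolding X2 kk C1_def[symmetric] using rel_I2 Gsub by metis
      next
        case xinP: True
        hence X2: "(insert j A - S2) \<inter> P = insert x X" using U2 X_def by auto
        define C2 where "C2 = top R k1 (insert x X)"
        have xnX': "x \<notin> X" using xnX X_def by auto
        have fX2: "finite (insert x X)" using fX by simp
        have XI2: "insert x X \<subseteq> I" using XI xA j A by auto
        have cC2: "card C2 = min k1 (Suc (card X))"
          using card_top[OF fX2 XI2 slo] C2_def fX xnX' by simp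
        have C2sub: "C2 - {x} \<subseteq> C1" unfolding C2_def C1_def by (rule top_insert[OF fX])
        have fC2: "finite C2" unfolding C2_def using finite_subset[OF top_sub fX2] .
        show ?thesis unfolding X2 kk C2_def[symmetric]
        proof (cases "x \<in> C2")
          case False
          hence "C2 \<subseteq> C1" using C2sub by blast
          moreover have "card C1 \<le> card C2" using cC1 cC2 by simp
          ultimately have "C2 = C1" using card_seteq[OF fC1] by blast
          have "x \<notin> C1" using C1X xnX' by auto
          hence "S2 \<union> C2 = insert j (S1 \<union> C1) - {x}" using x \<open>C2 = C1\<close> by auto
          moreover have "x \<in> insert j (S1 \<union> C1)" using x by blast
          ultimately show "rel q j G' (S1 \<union> C1) (S2 \<union> C2)" using rel_I2 Gsub by metis
        next
          case True
          have cd: "card (C2 - {x}) = card C2 - 1" using True fC2 by simp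
          show "rel q j G' (S1 \<union> C1) (S2 \<union> C2)"
          proof (cases "card C2 = Suc (card C1)")
            case True
            hence "card C1 \<le> card (C2 - {x})" using cd by simp
            hence "C2 - {x} = C1" using card_seteq[OF fC1 C2sub] by blast
            hence "S2 \<union> C2 = insert j (S1 \<union> C1)" using x \<open>x \<in> C2\<close> by auto
            thus ?thesis by (rule rel_I1)
          next
            case False
            hence "card C2 = card C1" using cC1 cC2 by linarith
            hence cc: "card C1 = Suc (card (C2 - {x}))" using card_Suc_Diff1[OF fC2 \<open>x \<in> C2\<close>]
              by simp
            obtain y where y: "y \<in> C1" "y \<notin> C2 - {x}" "C1 = insert y (C2 - {x})"
              by (rule card_1_obt[OF fC1 C2sub cc])
            have yX: "y \<in> X" using y C1X by auto
            have yj: "y \<noteq> j" "y \<notin> S1" "y \<in> P" "y \<noteq> x" using yX X_def j xnX' by auto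
            have jP: "j \<in> P" using xP xinP by simp
            have eq: "S2 \<union> C2 = insert j (S1 \<union> C1) - {y}"
              using x y yj \<open>x \<in> C2\<close> by auto
            have cond: "\<forall>Q\<in>G'. y \<in> Q \<longleftrightarrow> j \<in> Q" using G' yj jP by blast
            have yin: "y \<in> insert j (S1 \<union> C1)" using y by simp
            show ?thesis by (rule rel_I2[OF yin eq]) (use cond in blast)
          qed
        qed
      qed
    qed
  qed
qed



lemma minrel:
  assumes hier: "hierarchical I (set hs) \<rho>" and hm: "h \<in> minimal_types I \<rho> Rem0"
    and h2: "h2 \<in> Rem0" "h2 \<noteq> h" and R0: "Rem0 \<subseteq> set hs"
    and z: "z \<in> preim I \<rho> h"
  shows "z \<in> preim I \<rho> h2 \<longleftrightarrow> contains I \<rho> h2 h"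
proof
  assume z2: "z \<in> preim I \<rho> h2"
  have hR: "h \<in> Rem0" and nc: "\<not> contains I \<rho> h h2" using hm h2 by (auto simp: minimal_types_def)
  have ne: "preim I \<rho> h \<inter> preim I \<rho> h2 \<noteq> {}" using z z2 by blast
  have "preim I \<rho> h \<subset> preim I \<rho> h2 \<or> preim I \<rho> h2 \<subset> preim I \<rho> h"
    using hier hR h2 R0 ne unfolding hierarchical_def by blast
  thus "contains I \<rho> h2 h" using nc ne unfolding contains_def by blast
next
  assume "contains I \<rho> h2 h"
  thus "z \<in> preim I \<rho> h2" using z unfolding contains_def by blast
qed

lemma minrel2:
  assumes hier: "hierarchical I (set hs) \<rho>" and hm: "h \<in> minimal_types I \<rho> Rem0"
    and h2: "h2 \<in> Rem0" "h2 \<noteq> h" and R0: "Rem0 \<subseteq> set hs"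
    and z: "z \<in> preim I \<rho> h"
  shows "z \<in> preim I \<rho> h2 \<longleftrightarrow> preim I \<rho> h \<subseteq> preim I \<rho> h2"
  using minrel[OF assms] z unfolding contains_def by blast

definition BI :: "'i set \<Rightarrow> ('i \<Rightarrow> 'h set) \<Rightarrow> nat \<Rightarrow> ('h \<Rightarrow> nat) \<Rightarrow> 'i set \<Rightarrow> ('i, 'h) st \<Rightarrow> bool" where
  "BI I \<rho> q \<kappa> A st \<longleftrightarrow> (case st of (Rem, S, p, kap) \<Rightarrow>
     S \<subseteq> A \<and> p = q - card S \<and> (\<forall>h\<in>Rem. kap h = \<kappa> h - card (S \<inter> preim I \<rho> h)))"

lemma PT:
  assumes fin: "finite I" and A: "A \<subseteq> I" and bi: "BI I \<rho> q \<kappa> A (Rem, S, p, kap)"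
    and hier: "hierarchical I (set hs) \<rho>" and hm: "h \<in> minimal_types I \<rho> Rem0"
    and hR: "h \<in> Rem" and RR: "Rem \<subseteq> Rem0" and R0: "Rem0 \<subseteq> set hs"
  shows "\<exists>p' kap'. process_type I R \<rho> A h (Rem, S, p, kap) =
      (Rem - {h}, S \<union> top R (min (q - card S) (\<kappa> h - card (S \<inter> preim I \<rho> h))) ((A - S) \<inter> preim I \<rho> h), p', kap')
     \<and> BI I \<rho> q \<kappa> A (Rem - {h}, S \<union> top R (min (q - card S) (\<kappa> h - card (S \<inter> preim I \<rho> h))) ((A - S) \<inter> preim I \<rho> h), p', kap')"
proof -
  have S: "S \<subseteq> A" and p: "p = q - card S" and kap: "\<forall>h\<in>Rem. kap h = \<kappa> h - card (S \<inter> preim I \<rho> h)"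
    using bi by (auto simp: BI_def)
  have fA: "finite A" using finite_subset[OF A fin] .
  have fS: "finite S" using finite_subset[OF S fA] .
  define X where "X = (A - S) \<inter> preim I \<rho> h"
  have X': "{i \<in> A - S. h \<in> \<rho> i} = X" using A by (auto simp: X_def preim_def)
  have kh: "kap h = \<kappa> h - card (S \<inter> preim I \<rho> h)" using kap hR by blast
  define C where "C = top R (min (q - card S) (\<kappa> h - card (S \<inter> preim I \<rho> h))) X"
  have CX: "C \<subseteq> X" by (simp add: C_def top_sub)
  have fX: "finite X" using fA by (simp add: X_def)
  have fC: "finite C" using finite_subset[OF CX fX] .
  have CS: "C \<inter> S = {}" using CX X_def by auto
  have cSC: "card (S \<union> C) = card S + card C" using card_Un_disjoint[OF fS fC] CS by (simp add: Int_commute)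
  have eq: "process_type I R \<rho> A h (Rem, S, p, kap) = (Rem - {h}, S \<union> C, p - card C,
          (\<lambda>h''. if contains I \<rho> h'' h then kap h'' - card C else kap h''))"
  proof -
    have "process_type I R \<rho> A h (Rem, S, p, kap) = (Rem - {h}, S \<union> top R (min p (kap h)) X,
       p - card (top R (min p (kap h)) X),
       (\<lambda>h''. if contains I \<rho> h'' h then kap h'' - card (top R (min p (kap h)) X) else kap h''))"
      unfolding process_type_def Let_def prod.case X' ..
    thus ?thesis unfolding C_def kh[symmetric] p .
  qed
  have bi2: "BI I \<rho> q \<kappa> A (Rem - {h}, S \<union> C, p - card C,
          (\<lambda>h''. if contains I \<rho> h'' h then kap h'' - card C else kap h''))"
    unfolding BI_def
  proof (simp only: prod.case, intro conjI ballI)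
    show "S \<union> C \<subseteq> A" using S CX X_def by auto
    show "p - card C = q - card (S \<union> C)" using p cSC by simp
    fix h2 assume h2: "h2 \<in> Rem - {h}"
    have h20: "h2 \<in> Rem0" "h2 \<noteq> h" using h2 RR by auto
    have kh2: "kap h2 = \<kappa> h2 - card (S \<inter> preim I \<rho> h2)" using kap h2 by blast
    show "(if contains I \<rho> h2 h then kap h2 - card C else kap h2) = \<kappa> h2 - card ((S \<union> C) \<inter> preim I \<rho> h2)"
    proof (cases "contains I \<rho> h2 h")
      case True
      have "C \<subseteq> preim I \<rho> h2" using CX X_def minrel[OF hier hm h20 R0] True by auto
      hence "(S \<union> C) \<inter> preim I \<rho> h2 = (S \<inter> preim I \<rho> h2) \<union> C" by auto
      moreover have "card ((S \<inter> preim I \<rho> h2) \<union> C) = card (S \<inter> preim I \<rho> h2) + card C"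
        using card_Un_disjoint[of "S \<inter> preim I \<rho> h2" C] fS fC CS by auto
      ultimately show ?thesis using True kh2 by simp
    next
      case False
      have "C \<inter> preim I \<rho> h2 = {}" using CX X_def minrel[OF hier hm h20 R0] False by auto
      hence "(S \<union> C) \<inter> preim I \<rho> h2 = S \<inter> preim I \<rho> h2" by auto
      thus ?thesis using False kh2 by simp
    qed
  qed
  show ?thesis using eq bi2 unfolding C_def X_def by blast
qed



definition INV where
  "INV I \<rho> q \<kappa> A j st1 st2 \<longleftrightarrow> (\<exists>Rem S1 p1 kap1 S2 p2 kap2. st1 = (Rem, S1, p1, kap1) \<and> st2 = (Rem, S2, p2, kap2)
     \<and> BI I \<rho> q \<kappa> A st1 \<and> BI I \<rho> q \<kappa> (insert j A) st2 \<and> rel q j (preim I \<rho> ` Rem) S1 S2)"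

lemma fold_inv:
  assumes fin: "finite I" and slo: "strict_linear_order_on I R" and hier: "hierarchical I (set hs) \<rho>"
    and A: "A \<subseteq> I" and j: "j \<in> I" "j \<notin> A" and R0: "Rem0 \<subseteq> set hs"
  shows "distinct xs \<Longrightarrow> set xs \<subseteq> minimal_types I \<rho> Rem0 \<Longrightarrow> set xs \<subseteq> fst st1 \<Longrightarrow> fst st1 \<subseteq> Rem0 \<Longrightarrow>
    INV I \<rho> q \<kappa> A j st1 st2 \<Longrightarrow>
    INV I \<rho> q \<kappa> A j (foldl (\<lambda>s h. process_type I R \<rho> A h s) st1 xs)
                      (foldl (\<lambda>s h. process_type I R \<rho> (insert j A) h s) st2 xs)
    \<and> fst (foldl (\<lambda>s h. process_type I R \<rho> A h s) st1 xs) \<subseteq> Rem0"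
proof (induction xs arbitrary: st1 st2)
  case Nil thus ?case by simp
next
  case (Cons h xs)
  obtain Rem S1 p1 kap1 S2 p2 kap2 where st: "st1 = (Rem, S1, p1, kap1)" "st2 = (Rem, S2, p2, kap2)"
    and b1: "BI I \<rho> q \<kappa> A st1" and b2: "BI I \<rho> q \<kappa> (insert j A) st2"
    and r: "rel q j (preim I \<rho> ` Rem) S1 S2"
    using Cons.prems(5) unfolding INV_def by blast
  have hm: "h \<in> minimal_types I \<rho> Rem0" using Cons.prems(2) by simp
  have hR: "h \<in> Rem" using Cons.prems(3) st by simp
  have RR: "Rem \<subseteq> Rem0" using Cons.prems(4) st by simp
  have A2: "insert j A \<subseteq> I" using A j by simp
  define P where "P = preim I \<rho> h"
  obtain p1' kap1' where e1: "process_type I R \<rho> A h st1 =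
      (Rem - {h}, S1 \<union> top R (min (q - card S1) (\<kappa> h - card (S1 \<inter> P))) ((A - S1) \<inter> P), p1', kap1')"
    and b1': "BI I \<rho> q \<kappa> A (Rem - {h}, S1 \<union> top R (min (q - card S1) (\<kappa> h - card (S1 \<inter> P))) ((A - S1) \<inter> P), p1', kap1')"
    using PT[OF fin A b1[unfolded st] hier hm hR RR R0, of R] st unfolding P_def by blast
  obtain p2' kap2' where e2: "process_type I R \<rho> (insert j A) h st2 =
      (Rem - {h}, S2 \<union> top R (min (q - card S2) (\<kappa> h - card (S2 \<inter> P))) ((insert j A - S2) \<inter> P), p2', kap2')"
    and b2': "BI I \<rho> q \<kappa> (insert j A) (Rem - {h}, S2 \<union> top R (min (q - card S2) (\<kappa> h - card (S2 \<inter> P))) ((insert j A - S2) \<inter> P), p2', kap2')"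
    using PT[OF fin A2 b2[unfolded st] hier hm hR RR R0, of R] st unfolding P_def by blast
  have S1A: "S1 \<subseteq> A" using b1 st by (simp add: BI_def)
  have PI: "P \<subseteq> I" by (auto simp: P_def preim_def)
  have PG: "P \<in> preim I \<rho> ` Rem \<or> insert j A \<subseteq> P" using hR P_def by blast
  have G': "\<forall>Q\<in>preim I \<rho> ` (Rem - {h}). Q \<in> preim I \<rho> ` Rem \<and> (\<forall>z\<in>P. z \<in> Q \<longleftrightarrow> P \<subseteq> Q)"
  proof
    fix Q assume "Q \<in> preim I \<rho> ` (Rem - {h})"
    then obtain h2 where h2: "h2 \<in> Rem" "h2 \<noteq> h" "Q = preim I \<rho> h2" by blast
    have h20: "h2 \<in> Rem0" using h2 RR by blast
    show "Q \<in> preim I \<rho> ` Rem \<and> (\<forall>z\<in>P. z \<in> Q \<longleftrightarrow> P \<subseteq> Q)"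
      using h2 minrel2[OF hier hm h20 h2(2) R0] unfolding P_def by blast
  qed
  have r': "rel q j (preim I \<rho> ` (Rem - {h}))
     (S1 \<union> top R (min (q - card S1) (\<kappa> h - card (S1 \<inter> P))) ((A - S1) \<inter> P))
     (S2 \<union> top R (min (q - card S2) (\<kappa> h - card (S2 \<inter> P))) ((insert j A - S2) \<inter> P))"
    by (rule step_rel[OF fin slo A j S1A PI r PG G'])
  have inv': "INV I \<rho> q \<kappa> A j (process_type I R \<rho> A h st1) (process_type I R \<rho> (insert j A) h st2)"
    unfolding INV_def e1 e2 using b1' b2' r' by blast
  have "distinct xs" "set xs \<subseteq> minimal_types I \<rho> Rem0" using Cons.prems by auto
  moreover have "set xs \<subseteq> fst (process_type I R \<rho> A h st1)" using Cons.prems(1,3) e1 st by auto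
  moreover have "fst (process_type I R \<rho> A h st1) \<subseteq> Rem0" using e1 RR by auto
  ultimately show ?case using Cons.IH[OF _ _ _ _ inv'] by simp
qed

lemma round_inv:
  assumes fin: "finite I" and slo: "strict_linear_order_on I R" and hier: "hierarchical I (set hs) \<rho>"
    and A: "A \<subseteq> I" and j: "j \<in> I" "j \<notin> A"
    and inv: "INV I \<rho> q \<kappa> A j st1 st2" and R0: "fst st1 \<subseteq> set hs" and dist: "distinct hs"
  shows "INV I \<rho> q \<kappa> A j (round I R \<rho> hs A st1) (round I R \<rho> hs (insert j A) st2)
    \<and> fst (round I R \<rho> hs A st1) \<subseteq> set hs"
proof -
  have same: "fst st2 = fst st1" using inv unfolding INV_def by auto
  define xs where "xs = filter (\<lambda>h. h \<in> minimal_types I \<rho> (fst st1)) hs"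
  have "distinct xs" using dist by (simp add: xs_def)
  have m: "set xs \<subseteq> minimal_types I \<rho> (fst st1)" by (auto simp: xs_def)
  moreover have "set xs \<subseteq> fst st1" using m by (auto simp: minimal_types_def)
  ultimately have "INV I \<rho> q \<kappa> A j (foldl (\<lambda>s h. process_type I R \<rho> A h s) st1 xs)
                      (foldl (\<lambda>s h. process_type I R \<rho> (insert j A) h s) st2 xs)
    \<and> fst (foldl (\<lambda>s h. process_type I R \<rho> A h s) st1 xs) \<subseteq> fst st1"
    using fold_inv[OF fin slo hier A j R0 \<open>distinct xs\<close>] inv by blast
  thus ?thesis unfolding round_def same xs_def[symmetric] using R0 by blast
qed

lemma pow_inv:
  assumes fin: "finite I" and slo: "strict_linear_order_on I R" and hier: "hierarchical I (set hs) \<rho>"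
    and A: "A \<subseteq> I" and j: "j \<in> I" "j \<notin> A" and dist: "distinct hs"
  shows "INV I \<rho> q \<kappa> A j ((round I R \<rho> hs A ^^ n) (set hs, {}, q, \<kappa>)) ((round I R \<rho> hs (insert j A) ^^ n) (set hs, {}, q, \<kappa>))
    \<and> fst ((round I R \<rho> hs A ^^ n) (set hs, {}, q, \<kappa>)) \<subseteq> set hs"
proof (induction n)
  case 0
  have "rel q j (preim I \<rho> ` set hs) {} {}" by (rule rel_I2[of j]) auto
  thus ?case by (simp add: INV_def BI_def)
next
  case (Suc n)
  show ?case using round_inv[OF fin slo hier A j Suc.IH[THEN conjunct1] Suc.IH[THEN conjunct2] dist] by simp
qed

definition gen where
  "gen I R hs q A \<kappa> \<rho> = (case (round I R \<rho> hs A ^^ length hs) (set hs, {}, q, \<kappa>) of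
              (Rem, S, p, kap) \<Rightarrow> S \<union> top R p (A - S))"

lemma rel_final:
  assumes "rel q j {} F1 F2" "j \<notin> F1" "finite F1"
  shows "F2 \<subseteq> insert j F1 \<and> card F1 \<le> card F2"
  using assms(1) unfolding rel_def
proof
  assume "F2 = insert j F1" thus ?thesis using assms by simp
next
  assume "\<exists>x\<in>insert j F1. F2 = insert j F1 - {x} \<and> (q - card F1 = 0 \<or> (\<forall>Q\<in>{}. x \<in> Q \<longleftrightarrow> j \<in> Q))"
  then obtain x where x: "x \<in> insert j F1" "F2 = insert j F1 - {x}" by blast
  have "card F2 = card F1"
  proof (cases "x = j")
    case True thus ?thesis using x assms by simp
  next
    case False thus ?thesis using x assms by (simp add: card_insert_if)
  qed
  thus ?thesis using x by auto
qed

lemma gen_key: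
  assumes fin: "finite I" and slo: "strict_linear_order_on I R" and hier: "hierarchical I (set hs) \<rho>"
    and A: "A \<subseteq> I" and j: "j \<in> I" "j \<notin> A" and dist: "distinct hs"
  shows "gen I R hs q (insert j A) \<kappa> \<rho> \<subseteq> insert j (gen I R hs q A \<kappa> \<rho>)
    \<and> card (gen I R hs q A \<kappa> \<rho>) \<le> card (gen I R hs q (insert j A) \<kappa> \<rho>)"
proof -
  have "INV I \<rho> q \<kappa> A j ((round I R \<rho> hs A ^^ length hs) (set hs, {}, q, \<kappa>))
          ((round I R \<rho> hs (insert j A) ^^ length hs) (set hs, {}, q, \<kappa>))"
    using pow_inv[OF fin slo hier A j dist] by blast
  then obtain Rem S1 p1 kap1 S2 p2 kap2 where
    st: "(round I R \<rho> hs A ^^ length hs) (set hs, {}, q, \<kappa>) = (Rem, S1, p1, kap1)"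
        "(round I R \<rho> hs (insert j A) ^^ length hs) (set hs, {}, q, \<kappa>) = (Rem, S2, p2, kap2)"
    and b1': "BI I \<rho> q \<kappa> A ((round I R \<rho> hs A ^^ length hs) (set hs, {}, q, \<kappa>))"
    and b2': "BI I \<rho> q \<kappa> (insert j A) ((round I R \<rho> hs (insert j A) ^^ length hs) (set hs, {}, q, \<kappa>))"
    and r: "rel q j (preim I \<rho> ` Rem) S1 S2"
    unfolding INV_def by blast
  have b1: "BI I \<rho> q \<kappa> A (Rem, S1, p1, kap1)" using b1' st by simp
  have b2: "BI I \<rho> q \<kappa> (insert j A) (Rem, S2, p2, kap2)" using b2' st by simp
  have S1: "S1 \<subseteq> A" "p1 = q - card S1" using b1 by (auto simp: BI_def)
  have S2: "S2 \<subseteq> insert j A" "p2 = q - card S2" using b2 by (auto simp: BI_def)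
  have S2I: "S2 \<inter> I = S2" "S1 \<inter> I = S1" using S1 S2 A j by auto
  have XI: "(A - S1) \<inter> I = A - S1" "(insert j A - S2) \<inter> I = insert j A - S2" using A j by auto
  have PG: "I \<in> preim I \<rho> ` Rem \<or> insert j A \<subseteq> I" using A j by blast
  have "rel q j {} (S1 \<union> top R (min (q - card S1) (q - card (S1 \<inter> I))) ((A - S1) \<inter> I))
                   (S2 \<union> top R (min (q - card S2) (q - card (S2 \<inter> I))) ((insert j A - S2) \<inter> I))"
    by (rule step_rel[OF fin slo A j S1(1) order_refl r PG]) simp
  hence r2: "rel q j {} (gen I R hs q A \<kappa> \<rho>) (gen I R hs q (insert j A) \<kappa> \<rho>)"
    unfolding gen_def st prod.case S2I XI S1(2) S2(2) by simp
  have fA: "finite A" using finite_subset[OF A fin] .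
  have GA: "gen I R hs q A \<kappa> \<rho> \<subseteq> A" unfolding gen_def st prod.case using S1(1) top_sub[of R p1 "A - S1"] by blast
  have "j \<notin> gen I R hs q A \<kappa> \<rho>" using GA j(2) by blast
  moreover have "finite (gen I R hs q A \<kappa> \<rho>)" using finite_subset[OF GA fA] .
  ultimately
  show ?thesis using rel_final[OF r2] by blast
qed

lemma gen_empty:
  assumes "\<forall>i\<in>A. \<rho> i = {}"
  shows "gen I R hs q A \<kappa> \<rho> = top R q A"
proof -
  have pt: "fst (snd (process_type I R \<rho> A h st)) = {} \<and> fst (snd (snd (process_type I R \<rho> A h st))) = q"
    if "fst (snd st) = {}" "fst (snd (snd st)) = q" for h st
  proof -
    obtain Rem S p kap where st: "st = (Rem, S, p, kap)" by (cases st) auto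
    have e: "{i \<in> A. h \<in> \<rho> i} = {}" using assms by auto
    have "fst (snd st) = S" "fst (snd (snd st)) = p" using st by auto
    hence "S = {}" "p = q" using that by auto
    thus ?thesis using st by (simp add: process_type_def Let_def e)
  qed
  have fo: "fst (snd (foldl (\<lambda>s h. process_type I R \<rho> A h s) st xs)) = {} \<and>
            fst (snd (snd (foldl (\<lambda>s h. process_type I R \<rho> A h s) st xs))) = q"
    if "fst (snd st) = {}" "fst (snd (snd st)) = q" for st xs
    using that
  proof (induction xs arbitrary: st)
    case Nil thus ?case by simp
  next
    case (Cons h xs) thus ?case using pt by simp
  qed
  have "fst (snd ((round I R \<rho> hs A ^^ n) (set hs, {}, q, \<kappa>))) = {} \<and>
        fst (snd (snd ((round I R \<rho> hs A ^^ n) (set hs, {}, q, \<kappa>)))) = q" for n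
  proof (induction n)
    case 0 thus ?case by simp
  next
    case (Suc n) thus ?case unfolding round_def using fo by simp
  qed
  note H = this[of "length hs"]
  obtain Rem S p kap where st: "(round I R \<rho> hs A ^^ length hs) (set hs, {}, q, \<kappa>) = (Rem, S, p, kap)"
    using prod_cases4 by blast
  have "S = {}" "p = q" using H unfolding st by simp_all
  thus ?thesis unfolding gen_def st by simp
qed

lemma Ch_gen: "Ch I R hs q A \<kappa> \<rho> = gen I R hs q A \<kappa> \<rho>"
proof (cases "\<forall>i\<in>A. \<rho> i = {}")
  case True
  thus ?thesis unfolding Ch_def using gen_empty[of A \<rho> I R hs q \<kappa>] by simp
next
  case False
  show ?thesis unfolding Ch_def gen_def by (simp only: if_not_P[OF False])
qed


theorem proposition2:
  fixes I :: "'i set" and R :: "'i rel" and hs :: "'h list" and q :: nat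
    and \<kappa> :: "'h \<Rightarrow> nat" and \<rho> :: "'i \<Rightarrow> 'h set"
  assumes "finite I"
    and "strict_linear_order_on I R"
    and "distinct hs"
    and "\<forall>i\<in>I. \<rho> i \<subseteq> set hs"
    and "hierarchical I (set hs) \<rho>"
  shows "(\<forall>A i j. A \<subseteq> I \<and> i \<in> I \<and> j \<in> I \<and> i \<notin> A \<and> j \<notin> A \<and> i \<noteq> j \<and>
            i \<in> Ch I R hs q (A \<union> {i, j}) \<kappa> \<rho> \<longrightarrow> i \<in> Ch I R hs q (A \<union> {i}) \<kappa> \<rho>)
       \<and> (\<forall>A i. A \<subseteq> I \<and> i \<in> I \<longrightarrow>
            card (Ch I R hs q A \<kappa> \<rho>) \<le> card (Ch I R hs q (A \<union> {i}) \<kappa> \<rho>))"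
proof -
  have key: "Ch I R hs q (insert j A) \<kappa> \<rho> \<subseteq> insert j (Ch I R hs q A \<kappa> \<rho>)
      \<and> card (Ch I R hs q A \<kappa> \<rho>) \<le> card (Ch I R hs q (insert j A) \<kappa> \<rho>)"
    if "A \<subseteq> I" "j \<in> I" "j \<notin> A" for A j
    unfolding Ch_gen using gen_key[OF assms(1,2,5) that assms(3)] .
  show ?thesis
  proof (intro conjI allI impI)
    fix A i j
    assume h: "A \<subseteq> I \<and> i \<in> I \<and> j \<in> I \<and> i \<notin> A \<and> j \<notin> A \<and> i \<noteq> j \<and> i \<in> Ch I R hs q (A \<union> {i, j}) \<kappa> \<rho>"
    have e: "A \<union> {i, j} = insert j (insert i A)" "A \<union> {i} = insert i A" by auto
    have s: "insert i A \<subseteq> I" "j \<notin> insert i A" "j \<in> I" using h by auto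
    have "Ch I R hs q (insert j (insert i A)) \<kappa> \<rho> \<subseteq> insert j (Ch I R hs q (insert i A) \<kappa> \<rho>)"
      using key[OF s(1) s(3) s(2)] by blast
    thus "i \<in> Ch I R hs q (A \<union> {i}) \<kappa> \<rho>" using h unfolding e by blast
  next
    fix A i
    assume h: "A \<subseteq> I \<and> i \<in> I"
    show "card (Ch I R hs q A \<kappa> \<rho>) \<le> card (Ch I R hs q (A \<union> {i}) \<kappa> \<rho>)"
    proof (cases "i \<in> A")
      case True
      hence "A \<union> {i} = A" by auto
      thus ?thesis by simp
    next
      case False
      have "A \<union> {i} = insert i A" by auto
      thus ?thesis using key[of A i] h False by simp
    qed
  qed
qed

end
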